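(* There exists an input distribution $\mathcal D$ over metric spaces together with dynamic point (ID) streams in these metrics such that, for any deterministic streaming algorithm $\mathcal A$, when its input is sampled from $\mathcal D$, $\mathcal A$ must use $\Omega(n^{1/3})$ space to compute a $\mathrm{poly}(n)$-approximation of MaxCut (of the points remaining at the end of the stream) with probability at least $0.55$, where $n$ is the number of points.
   Context: Dynamic streaming model: a set of points in an underlying metric space $(V,\mathrm{dist})$ is presented as a stream of insertions and deletions of point IDs; at the end the algorithm must report an estimate of $\mathrm{MaxCut}$ of the points inserted and not deleted. The algorithm may store or manipulate arbitrary encodings of IDs and has access to a distance oracle which, on two IDs, returns the distance between the corresponding points; a query is permitted only if both IDs are valid, i.e. have appeared in the stream (querying an invalid ID makes the algorithm fail immediately). Here $\mathrm{cut}(S,T):=\sum_{x\in S}\sum_{y\in T}\mathrm{dist}(x,y)$ and $\mathrm{MaxCut}(P):=\max_{S\subseteq P}\mathrm{cut}(S,P\setminus S)$; an $\alpha$-approximation is a value $E$ with $\mathrm{MaxCut}(P)/\alpha\le E\le\mathrm{MaxCut}(P)$. *)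

theory Defs
  imports "HOL-Probability.Probability"
begin

text \<open>Points of the underlying metric space are identified by IDs (natural numbers).
  A stream is a list of insertions / deletions of IDs.\<close>

datatype op = Ins nat | Del nat

fun op_id :: "op \<Rightarrow> nat" where
  "op_id (Ins i) = i"
| "op_id (Del i) = i"

fun wf_stream :: "nat set \<Rightarrow> op list \<Rightarrow> bool" where
  "wf_stream P [] = True"
| "wf_stream P (Ins i # xs) = (i \<notin> P \<and> wf_stream (insert i P) xs)"
| "wf_stream P (Del i # xs) = (i \<in> P \<and> wf_stream (P - {i}) xs)"

fun final_set :: "nat set \<Rightarrow> op list \<Rightarrow> nat set" where
  "final_set P [] = P"
| "final_set P (Ins i # xs) = final_set (insert i P) xs"
| "final_set P (Del i # xs) = final_set (P - {i}) xs"

definition stream_ids :: "op list \<Rightarrow> nat set" where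
  "stream_ids xs = op_id ` set xs"

definition cut :: "(nat \<Rightarrow> nat \<Rightarrow> real) \<Rightarrow> nat set \<Rightarrow> nat set \<Rightarrow> real" where
  "cut d S T = (\<Sum>x\<in>S. \<Sum>y\<in>T. d x y)"

definition MaxCut :: "(nat \<Rightarrow> nat \<Rightarrow> real) \<Rightarrow> nat set \<Rightarrow> real" where
  "MaxCut d P = Max {cut d S (P - S) | S. S \<subseteq> P}"

definition is_metric_on :: "nat set \<Rightarrow> (nat \<Rightarrow> nat \<Rightarrow> real) \<Rightarrow> bool" where
  "is_metric_on V d \<longleftrightarrow>
     (\<forall>x\<in>V. \<forall>y\<in>V. d x y = d y x \<and> (d x y = 0 \<longleftrightarrow> x = y) \<and> d x y \<ge> 0) \<and>
     (\<forall>x\<in>V. \<forall>y\<in>V. \<forall>z\<in>V. d x z \<le> d x y + d y z)"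

text \<open>An adaptive computation with distance-oracle queries: either return a value, or
  query the distance between two IDs and continue depending on the answer.\<close>
datatype 'r qtree = Ret 'r | Query nat nat "real \<Rightarrow> 'r qtree"

primrec run_q :: "(nat \<Rightarrow> nat \<Rightarrow> real) \<Rightarrow> nat set \<Rightarrow> 'r qtree \<Rightarrow> 'r option" where
  "run_q d V (Ret r) = Some r"
| "run_q d V (Query i j k) =
     (if i \<in> V \<and> j \<in> V then run_q d V (k (d i j)) else None)"

text \<open>A deterministic streaming algorithm: its memory between updates is a bit string.\<close>
record alg =
  a_init :: "bool list"
  a_step :: "bool list \<Rightarrow> op \<Rightarrow> bool list qtree"
  a_out  :: "bool list \<Rightarrow> real qtree"

text \<open>V is the set of IDs
  seen so far; the current element's ID is valid when processing it.\<close>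
fun trace :: "(nat \<Rightarrow> nat \<Rightarrow> real) \<Rightarrow> alg \<Rightarrow> nat set \<Rightarrow> bool list \<Rightarrow> op list
                \<Rightarrow> bool list list \<times> bool list option" where
  "trace d A V \<sigma> [] = ([\<sigma>], Some \<sigma>)"
| "trace d A V \<sigma> (x # xs) =
     (case run_q d (insert (op_id x) V) (a_step A \<sigma> x) of
        None \<Rightarrow> ([\<sigma>], None)
      | Some \<sigma>' \<Rightarrow> (let (tr, r) = trace d A (insert (op_id x) V) \<sigma>' xs in (\<sigma> # tr, r)))"

type_synonym stream_instance = "(nat \<Rightarrow> nat \<Rightarrow> real) \<times> op list"

definition space_used :: "alg \<Rightarrow> stream_instance \<Rightarrow> nat" where
  "space_used A I = Max (length ` set (fst (trace (fst I) A {} (a_init A) (snd I))))"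

definition alg_output :: "alg \<Rightarrow> stream_instance \<Rightarrow> real option" where
  "alg_output A I = (case snd (trace (fst I) A {} (a_init A) (snd I)) of
                   None \<Rightarrow> None
                 | Some \<sigma> \<Rightarrow> run_q (fst I) (stream_ids (snd I)) (a_out A \<sigma>))"

definition approx_success :: "real \<Rightarrow> alg \<Rightarrow> stream_instance \<Rightarrow> bool" where
  "approx_success \<alpha> A I \<longleftrightarrow>
     (\<exists>E. alg_output A I = Some E \<and>
          MaxCut (fst I) (final_set {} (snd I)) / \<alpha> \<le> E \<and>
          E \<le> MaxCut (fst I) (final_set {} (snd I)))"

definition valid_instance :: "nat \<Rightarrow> stream_instance \<Rightarrow> bool" where
  "valid_instance n I \<longleftrightarrow> is_metric_on {0..<n} (fst I) \<and> wf_stream {} (snd I) \<and>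
                          stream_ids (snd I) \<subseteq> {0..<n}"

end

theory Submission
  imports Defs
begin


lemma run_q_mono: "run_q d V t = Some r \<Longrightarrow> V \<subseteq> W \<Longrightarrow> run_q d W t = Some r"
  by (induction t) (auto split: if_splits)

lemma trace_hd: "\<sigma> \<in> set (fst (trace d A V \<sigma> xs))"
  by (cases xs) (auto split: option.splits prod.splits)

lemma trace_mono: "snd (trace d A V \<sigma> ys) = Some \<sigma>f \<Longrightarrow> V \<subseteq> W \<Longrightarrow> snd (trace d A W \<sigma> ys) = Some \<sigma>f"
proof (induction ys arbitrary: V W \<sigma>)
  case Nil
  then show ?case by simp
next
  case (Cons x ys)
  from Cons.prems obtain \<sigma>1 where r: "run_q d (insert (op_id x) V) (a_step A \<sigma> x) = Some \<sigma>1"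
    and t: "snd (trace d A (insert (op_id x) V) \<sigma>1 ys) = Some \<sigma>f"
    by (auto split: option.splits prod.splits)
  have r2: "run_q d (insert (op_id x) W) (a_step A \<sigma> x) = Some \<sigma>1"
    using run_q_mono[OF r] Cons.prems(2) by blast
  have "snd (trace d A (insert (op_id x) W) \<sigma>1 ys) = Some \<sigma>f"
    using Cons.IH[OF t] Cons.prems(2) by blast
  then show ?case using r2 by (auto split: prod.splits)
qed

lemma trace_append:
  "snd (trace d A V \<sigma> (xs @ ys)) = Some \<sigma>f \<Longrightarrow>
   \<exists>\<sigma>'. snd (trace d A V \<sigma> xs) = Some \<sigma>' \<and> \<sigma>' \<in> set (fst (trace d A V \<sigma> (xs @ ys))) \<and>
        snd (trace d A (V \<union> op_id ` set xs) \<sigma>' ys) = Some \<sigma>f"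
proof (induction xs arbitrary: V \<sigma>)
  case Nil
  then show ?case using trace_hd by auto
next
  case (Cons x xs)
  from Cons.prems obtain \<sigma>1 where r: "run_q d (insert (op_id x) V) (a_step A \<sigma> x) = Some \<sigma>1"
    and t: "snd (trace d A (insert (op_id x) V) \<sigma>1 (xs @ ys)) = Some \<sigma>f"
    by (auto split: option.splits prod.splits)
  from Cons.IH[OF t] obtain \<sigma>' where
    a: "snd (trace d A (insert (op_id x) V) \<sigma>1 xs) = Some \<sigma>'"
    and b: "\<sigma>' \<in> set (fst (trace d A (insert (op_id x) V) \<sigma>1 (xs @ ys)))"
    and c: "snd (trace d A (insert (op_id x) V \<union> op_id ` set xs) \<sigma>' ys) = Some \<sigma>f" by blast
  show ?case
    apply (rule exI[of _ \<sigma>'])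
    using a b c r by (auto split: prod.splits simp: insert_commute)
qed

lemma wf_append: "wf_stream P (xs @ ys) = (wf_stream P xs \<and> wf_stream (final_set P xs) ys)"
  by (induction P xs rule: wf_stream.induct) auto

lemma final_append: "final_set P (xs @ ys) = final_set (final_set P xs) ys"
  by (induction P xs rule: final_set.induct) auto

lemma wf_ins: "wf_stream P (map Ins l) = (distinct l \<and> set l \<inter> P = {})"
  by (induction l arbitrary: P) auto

lemma final_ins: "final_set P (map Ins l) = P \<union> set l"
  by (induction l arbitrary: P) auto

lemma wf_del: "wf_stream P (map Del l) = (distinct l \<and> set l \<subseteq> P)"
  by (induction l arbitrary: P) auto

lemma final_del: "final_set P (map Del l) = P - set l"
  by (induction l arbitrary: P) auto



definition Bn :: "nat \<Rightarrow> nat \<Rightarrow> real" where "Bn n k = real n ^ (k+2) + 1"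
definition dmet :: "nat \<Rightarrow> nat \<Rightarrow> nat \<Rightarrow> nat \<Rightarrow> real" where
  "dmet n k a b = (if a = b then 0 else Bn n k ^ max a b)"
definition cid :: "nat \<Rightarrow> nat \<Rightarrow> nat" where "cid j v = 1 + 16*j + v"

lemma Bn_ge1: "Bn n k \<ge> 1" unfolding Bn_def by simp

lemma metric: "is_metric_on V (dmet n k)"
proof -
  have B1: "Bn n k \<ge> 1" by (rule Bn_ge1)
  have pos: "Bn n k ^ e > 0" for e using B1 by simp
  have tri: "dmet n k x z \<le> dmet n k x y + dmet n k y z" for x y z
  proof (cases "x = z")
    case True then show ?thesis unfolding dmet_def using pos[of "max z y"] pos[of "max y z"] by auto
  next
    case False
    have "Bn n k ^ max x z \<le> Bn n k ^ max x y + Bn n k ^ max y z"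
    proof (cases "x \<le> z")
      case True
      then have "Bn n k ^ max x z \<le> Bn n k ^ max y z"
        using B1 by (intro power_increasing) auto
      then show ?thesis using pos[of "max x y"] by linarith
    next
      case False
      then have "Bn n k ^ max x z \<le> Bn n k ^ max x y"
        using B1 by (intro power_increasing) auto
      then show ?thesis using pos[of "max y z"] by linarith
    qed
    then show ?thesis unfolding dmet_def using False pos
      by (cases "x = y"; cases "y = z") (auto simp: max.commute)
  qed
  have sym: "dmet n k x y = dmet n k y x \<and> (dmet n k x y = 0) = (x = y) \<and> 0 \<le> dmet n k x y" for x y
    unfolding dmet_def using pos[of "max x y"] B1 by (auto simp: max.commute)
  show ?thesis unfolding is_metric_on_def using tri sym by blast
qed

lemma maxcut_bounds:
  assumes fin: "finite F" and z: "0 \<in> F" and mu: "\<mu> \<in> F" "\<mu> > 0" and le: "\<forall>y\<in>F. y \<le> \<mu>"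
    and cF: "card F \<le> n"
  shows "Bn n k ^ \<mu> \<le> MaxCut (dmet n k) F" "MaxCut (dmet n k) F \<le> real n ^ 2 * Bn n k ^ \<mu>"
proof -
  let ?d = "dmet n k"
  have B1: "Bn n k \<ge> 1" by (rule Bn_ge1)
  have eqset: "{cut ?d S (F - S) | S. S \<subseteq> F} = (\<lambda>S. cut ?d S (F - S)) ` Pow F" by auto
  have finS: "finite {cut ?d S (F - S) | S. S \<subseteq> F}" unfolding eqset using fin by simp
  have nonneg: "?d a b \<ge> 0" for a b unfolding dmet_def using B1 by simp
  have "cut ?d {\<mu>} (F - {\<mu>}) = (\<Sum>y\<in>F - {\<mu>}. ?d \<mu> y)" unfolding cut_def by simp
  also have "\<dots> \<ge> ?d \<mu> 0"
    by (rule member_le_sum) (use fin z mu nonneg in auto)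
  finally have c1: "cut ?d {\<mu>} (F - {\<mu>}) \<ge> Bn n k ^ \<mu>" unfolding dmet_def using mu by simp
  have "cut ?d {\<mu>} (F - {\<mu>}) \<le> MaxCut ?d F" unfolding MaxCut_def
    by (rule Max_ge[OF finS]) (use mu in auto)
  then show "Bn n k ^ \<mu> \<le> MaxCut ?d F" using c1 by linarith
  have bnd: "cut ?d S (F - S) \<le> real n ^ 2 * Bn n k ^ \<mu>" if "S \<subseteq> F" for S
  proof -
    have "cut ?d S (F - S) \<le> (\<Sum>x\<in>S. \<Sum>y\<in>F - S. Bn n k ^ \<mu>)" unfolding cut_def
    proof (intro sum_mono)
      fix x y assume "x \<in> S" "y \<in> F - S"
      then have "max x y \<le> \<mu>" using le that by auto
      then have "Bn n k ^ max x y \<le> Bn n k ^ \<mu>" using B1 by (intro power_increasing) auto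
      then show "?d x y \<le> Bn n k ^ \<mu>" unfolding dmet_def using B1 by auto
    qed
    also have "\<dots> = real (card S) * real (card (F - S)) * Bn n k ^ \<mu>" by simp
    also have "\<dots> \<le> real n * real n * Bn n k ^ \<mu>"
    proof -
      have "card S \<le> n" using card_mono[OF fin that] cF by linarith
      moreover have "card (F - S) \<le> n" using card_mono[OF fin, of "F - S"] cF by auto
      ultimately show ?thesis using B1 by (intro mult_right_mono mult_mono) auto
    qed
    finally show ?thesis by (simp only: power2_eq_square)
  qed
  show "MaxCut ?d F \<le> real n ^ 2 * Bn n k ^ \<mu>" unfolding MaxCut_def
    using finS bnd by (subst Max_le_iff) auto
qed

lemma decode_unique:
  assumes n: "n \<ge> 1"
    and a: "Bn n k ^ e / real n ^ k \<le> E" "E \<le> real n ^ 2 * Bn n k ^ e"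
    and b: "Bn n k ^ e' / real n ^ k \<le> E" "E \<le> real n ^ 2 * Bn n k ^ e'"
  shows "e = e'"
proof (rule ccontr)
  have B1: "Bn n k \<ge> 1" by (rule Bn_ge1)
  have np: "real n ^ k > 0" using n by simp
  have key: False if "e < e'" "Bn n k ^ e' / real n ^ k \<le> E" "E \<le> real n ^ 2 * Bn n k ^ e" for e e'
  proof -
    have "Bn n k ^ e' \<le> real n ^ k * E" using that(2) np by (simp add: field_simps)
    also have "\<dots> \<le> real n ^ k * (real n ^ 2 * Bn n k ^ e)" using that(3) np by simp
    also have "\<dots> = real n ^ (k+2) * Bn n k ^ e" by (simp only: power_add mult.assoc)
    finally have 1: "Bn n k ^ e' \<le> real n ^ (k+2) * Bn n k ^ e" .
    have "Bn n k ^ Suc e \<le> Bn n k ^ e'" using B1 that(1) by (intro power_increasing) auto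
    then have "Bn n k * Bn n k ^ e \<le> real n ^ (k+2) * Bn n k ^ e" using 1 by simp
    moreover have "Bn n k ^ e > 0" using B1 by simp
    ultimately have "Bn n k \<le> real n ^ (k+2)" by simp
    then show False unfolding Bn_def by simp
  qed
  assume "e \<noteq> e'"
  then show False using key[of e e'] key[of e' e] a b by linarith
qed



definition alice :: "nat \<Rightarrow> (nat \<Rightarrow> nat) \<Rightarrow> op list" where
  "alice m x = map Ins (0 # map (\<lambda>j. cid j (x j)) [0..<m])"
definition bob :: "nat \<Rightarrow> (nat \<Rightarrow> nat) \<Rightarrow> nat \<Rightarrow> op list" where
  "bob m x i = map Del (map (\<lambda>j. cid j (x j)) (rev [Suc i..<m]))"

lemma cid_inj: "v < 16 \<Longrightarrow> v' < 16 \<Longrightarrow> cid j v = cid j' v' \<Longrightarrow> j = j'"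
proof -
  assume a: "v < 16" "v' < 16" "cid j v = cid j' v'"
  then have "(16*j + v) div 16 = (16*j' + v') div 16" unfolding cid_def by simp
  then show "j = j'" using a by simp
qed

lemma stream_props:
  assumes x: "x \<in> Pi\<^sub>E {0..<m} (\<lambda>_. {0..<16})" and i: "i < m" and mn: "16*m < n"
  shows "wf_stream {} (alice m x @ bob m x i)"
    "final_set {} (alice m x @ bob m x i) = insert 0 ((\<lambda>j. cid j (x j)) ` {0..i})"
    "stream_ids (alice m x @ bob m x i) \<subseteq> {0..<n}"
proof -
  let ?c = "\<lambda>j. cid j (x j)"
  have xl: "j < m \<Longrightarrow> x j < 16" for j using x by (auto simp: PiE_iff)
  have inj: "inj_on ?c {0..<m}" by (rule inj_onI) (use cid_inj xl in \<open>metis atLeastLessThan_iff\<close>)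
  have c0: "0 \<notin> ?c ` A" for A by (auto simp: cid_def)
  have fa: "final_set {} (alice m x) = insert 0 (?c ` {0..<m})"
    unfolding alice_def final_ins by simp
  have wa: "wf_stream {} (alice m x)"
    unfolding alice_def wf_ins using inj c0[of "{0..<m}"] by (auto simp: distinct_map)
  have inj2: "inj_on ?c {Suc i..<m}" using inj by (rule inj_on_subset) auto
  have wb: "wf_stream (insert 0 (?c ` {0..<m})) (bob m x i)"
    unfolding bob_def wf_del using inj2 by (auto simp: distinct_map)
  show "wf_stream {} (alice m x @ bob m x i)" using wa wb fa by (simp add: wf_append)
  have "?c ` {0..<m} - ?c ` {Suc i..<m} = ?c ` ({0..<m} - {Suc i..<m})"
    using inj by (intro inj_on_image_set_diff[symmetric]) auto
  also have "{0..<m} - {Suc i..<m} = {0..i}" using i by auto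
  finally have dd: "?c ` {0..<m} - ?c ` {Suc i..<m} = ?c ` {0..i}" .
  have "final_set {} (alice m x @ bob m x i) = insert 0 (?c ` {0..<m}) - ?c ` {Suc i..<m}"
    unfolding final_append fa bob_def final_del by simp
  also have "\<dots> = insert 0 (?c ` {0..i})"
  proof -
    have "insert 0 (?c ` {0..<m}) - ?c ` {Suc i..<m} = insert 0 (?c ` {0..<m} - ?c ` {Suc i..<m})"
      using c0[of "{Suc i..<m}"] by (simp only: insert_Diff_if if_False)
    then show ?thesis using dd by simp
  qed
  finally show "final_set {} (alice m x @ bob m x i) = insert 0 ((\<lambda>j. cid j (x j)) ` {0..i})" .
  have cb: "j < m \<Longrightarrow> ?c j < n" for j
  proof -
    assume j: "j < m"
    then have "16 * j + 16 \<le> 16 * m" by simp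
    then show "?c j < n" using xl[OF j] mn unfolding cid_def by linarith
  qed
  show "stream_ids (alice m x @ bob m x i) \<subseteq> {0..<n}"
    unfolding stream_ids_def alice_def bob_def using cb mn by auto
qed



lemma core:
  fixes st :: "(nat\<Rightarrow>nat) \<Rightarrow> 'a" and g :: "'a \<Rightarrow> nat \<Rightarrow> (nat \<Rightarrow> nat) \<Rightarrow> nat"
    and Succ :: "(nat\<Rightarrow>nat) \<Rightarrow> nat \<Rightarrow> bool"
  assumes q0: "q > 0" and fin: "finite S" and st: "\<forall>x\<in>Pi\<^sub>E {0..<m} (\<lambda>_. {0..<q}). st x \<in> S"
   and sc: "\<forall>x\<in>Pi\<^sub>E {0..<m} (\<lambda>_. {0..<q}). \<forall>i<m. Succ x i \<longrightarrow> x i = g (st x) i (\<lambda>j. if i < j then x j else 0)"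
  shows "(\<Sum>x\<in>Pi\<^sub>E {0..<m} (\<lambda>_. {0..<q}). card {i. i<m \<and> Succ x i}) \<le> m * (card S * 2^m * q^r) + q^m * (m - r)"
proof -
  define X where "X = Pi\<^sub>E {0..<m} (\<lambda>_. {0..<(q::nat)})"
  define W where "W x = {i. i<m \<and> x i \<noteq> g (st x) i (\<lambda>j. if i < j then x j else 0)}" for x
  have finX: "finite X" unfolding X_def by (simp add: finite_PiE)
  have cardX: "card X = q^m" unfolding X_def by (simp add: card_PiE)
  have Wsub: "W x \<subseteq> {0..<m}" for x unfolding W_def by auto
  have succ_le: "card {i. i<m \<and> Succ x i} \<le> m - card (W x)" if "x \<in> X" for x
  proof -
    have "{i. i<m \<and> Succ x i} \<subseteq> {0..<m} - W x" using sc that unfolding W_def X_def by auto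
    then have "card {i. i<m \<and> Succ x i} \<le> card ({0..<m} - W x)" by (intro card_mono) auto
    also have "\<dots> = m - card (W x)" using Wsub[of x] by (simp add: card_Diff_subset finite_subset)
    finally show ?thesis .
  qed
  define f where "f x = (st x, W x, restrict x (W x))" for x
  have inj: "inj_on f X"
  proof (rule inj_onI)
    fix x y assume xX: "x \<in> X" and yX: "y \<in> X" and eq: "f x = f y"
    have sxy: "st x = st y" and wxy: "W x = W y" and rxy: "restrict x (W x) = restrict y (W y)"
      using eq unfolding f_def by auto
    have "x j = y j" for j
    proof (induction j rule: measure_induct_rule[of "\<lambda>j. m - j"])
      case (less j)
      show ?case
      proof (cases "j < m")
        case False
        then show ?thesis using PiE_arb[OF xX[unfolded X_def]] PiE_arb[OF yX[unfolded X_def]] by simp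
      next
        case True
        have ab: "(\<lambda>j'. if j < j' then x j' else 0) = (\<lambda>j'. if j < j' then y j' else 0)"
        proof
          fix j' show "(if j < j' then x j' else 0) = (if j < j' then y j' else 0)"
          proof (cases "j < j' \<and> j' < m")
            case True then show ?thesis using less by auto
          next
            case False
            then show ?thesis using PiE_arb[OF xX[unfolded X_def]] PiE_arb[OF yX[unfolded X_def]] by (cases "j < j'") simp_all
          qed
        qed
        show ?thesis
        proof (cases "j \<in> W x")
          case True
          have "restrict x (W x) j = restrict y (W y) j" using rxy by simp
          then show ?thesis using True wxy by simp
        next
          case False
          then have "j \<notin> W y" using wxy by simp
          have "x j = g (st x) j (\<lambda>j'. if j < j' then x j' else 0)" using False True unfolding W_def by blast
          moreover have "y j = g (st y) j (\<lambda>j'. if j < j' then y j' else 0)" using \<open>j \<notin> W y\<close> True unfolding W_def by blast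
          ultimately show ?thesis using sxy ab by simp
        qed
      qed
    qed
    then show "x = y" by auto
  qed
  define Bad where "Bad = {x\<in>X. card (W x) \<le> r}"
  define T where "T = Sigma {V. V \<subseteq> {0..<m} \<and> card V \<le> r} (\<lambda>V. Pi\<^sub>E V (\<lambda>_. {0..<q}))"
  have finT: "finite T" unfolding T_def
    by (intro finite_SigmaI finite_PiE) (auto intro: finite_subset)
  have cardT: "card T \<le> 2^m * q^r"
  proof -
    have "card T = (\<Sum>V\<in>{V. V \<subseteq> {0..<m} \<and> card V \<le> r}. card (Pi\<^sub>E V (\<lambda>_. {0..<q})))"
      unfolding T_def by (rule card_SigmaI) (auto intro: finite_subset finite_PiE)
    also have "\<dots> \<le> (\<Sum>V\<in>{V. V \<subseteq> {0..<m} \<and> card V \<le> r}. q^r)"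
    proof (rule sum_mono)
      fix V assume "V \<in> {V. V \<subseteq> {0..<m} \<and> card V \<le> r}"
      then have "finite V" "card V \<le> r" by (auto intro: finite_subset)
      then show "card (Pi\<^sub>E V (\<lambda>_. {0..<q})) \<le> q^r"
        using q0 by (simp add: card_PiE power_increasing)
    qed
    also have "\<dots> = card {V. V \<subseteq> {0..<m} \<and> card V \<le> r} * q^r" by simp
    also have "\<dots> \<le> card (Pow {0..<m}) * q^r"
      by (intro mult_right_mono card_mono) auto
    also have "\<dots> = 2^m * q^r" by (simp add: card_Pow)
    finally show ?thesis .
  qed
  have imgsub: "f ` Bad \<subseteq> S \<times> T"
    using st Wsub unfolding f_def Bad_def T_def X_def by (fastforce simp: restrict_PiE_iff PiE_iff)
  have cardBad: "card Bad \<le> card S * 2^m * q^r"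
  proof -
    have "card Bad = card (f ` Bad)"
      using inj unfolding Bad_def by (intro card_image[symmetric]) (auto intro: inj_on_subset)
    also have "\<dots> \<le> card (S \<times> T)" using imgsub fin finT by (intro card_mono) auto
    also have "\<dots> \<le> card S * (2^m * q^r)" using cardT by (simp add: card_cartesian_product)
    finally show ?thesis by simp
  qed
  have "(\<Sum>x\<in>X. card {i. i<m \<and> Succ x i}) = (\<Sum>x\<in>Bad. card {i. i<m \<and> Succ x i}) + (\<Sum>x\<in>X - Bad. card {i. i<m \<and> Succ x i})"
    using finX unfolding Bad_def by (metis (no_types, lifting) Diff_subset mem_Collect_eq subsetI sum.subset_diff add.commute)
  also have "\<dots> \<le> (\<Sum>x\<in>Bad. m) + (\<Sum>x\<in>X - Bad. m - r)"
  proof (intro add_mono sum_mono)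
    fix x assume "x \<in> Bad"
    then show "card {i. i<m \<and> Succ x i} \<le> m" using succ_le[of x] unfolding Bad_def by auto
  next
    fix x assume "x \<in> X - Bad"
    then show "card {i. i<m \<and> Succ x i} \<le> m - r" using succ_le[of x] unfolding Bad_def by auto
  qed
  also have "\<dots> = card Bad * m + card (X - Bad) * (m - r)" by simp
  also have "\<dots> \<le> card S * 2^m * q^r * m + card X * (m - r)"
    using cardBad finX by (intro add_mono mult_right_mono card_mono) auto
  finally show ?thesis unfolding X_def[symmetric] using cardX by (simp add: algebra_simps)
qed



lemma sum_pow2: "(\<Sum>i\<le>s. (2::nat)^i) + 1 = 2^Suc s"
  by (induction s) auto

lemma main_n:
  fixes k n :: nat assumes n: "n \<ge> 2000"
  shows "\<exists>D :: stream_instance pmf. (\<forall>I\<in>set_pmf D. valid_instance n I) \<and>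
     (\<forall>(A::alg) (s::nat).
        (\<forall>I\<in>set_pmf D. space_used A I \<le> s) \<longrightarrow>
        measure_pmf.prob D {I. approx_success (real n ^ k) A I} \<ge> 0.55 \<longrightarrow>
        1/100 * real n powr (1/3) \<le> real s)"
proof -
  define r where "r = (n-1) div 32"
  define m where "m = 2*r"
  define X where "X = Pi\<^sub>E {0..<m} (\<lambda>_. {0..<16::nat})"
  define U where "U = X \<times> {0..<m}"
  define inst :: "(nat \<Rightarrow> nat) \<times> nat \<Rightarrow> stream_instance"
    where "inst = (\<lambda>(x,i). (dmet n k, alice m x @ bob m x i))"
  define D where "D = map_pmf inst (pmf_of_set U)"
  have r1: "r > 0" using n unfolding r_def by (simp add: div_greater_zero_iff)
  have m0: "m > 0" using r1 unfolding m_def by simp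
  have 32: "32 * r \<le> n - 1" unfolding r_def by simp
  have 33: "n - 1 < 32 * r + 32" unfolding r_def using div_mult_mod_eq[of "n-1" 32] by linarith
  have mn: "16*m < n" using 32 n unfolding m_def by linarith
  have finX: "finite X" unfolding X_def by (simp add: finite_PiE)
  have Xne: "X \<noteq> {}" unfolding X_def by (simp add: PiE_eq_empty_iff)
  have finU: "finite U" unfolding U_def using finX by simp
  have Une: "U \<noteq> {}" unfolding U_def using Xne m0 by auto
  have setD: "set_pmf D = inst ` U" unfolding D_def using finU Une by simp
  have valid: "\<forall>I\<in>set_pmf D. valid_instance n I"
  proof
    fix I assume "I \<in> set_pmf D"
    then obtain x i where xi: "x \<in> X" "i < m" and I: "I = inst (x,i)" unfolding setD U_def by auto
    show "valid_instance n I" unfolding I inst_def valid_instance_def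
      using metric stream_props[OF xi(1)[unfolded X_def] xi(2) mn] by simp
  qed
  show ?thesis
  proof (rule exI[of _ D], intro conjI valid allI impI)
    fix A :: alg and s :: nat
    assume sp: "\<forall>I\<in>set_pmf D. space_used A I \<le> s"
      and pr: "measure_pmf.prob D {I. approx_success (real n ^ k) A I} \<ge> 0.55"
    define d where "d = dmet n k"
    define \<alpha> :: real where "\<alpha> = real n ^ k"
    have \<alpha>0: "\<alpha> > 0" unfolding \<alpha>_def using n by simp
    define AS where "AS x = snd (trace d A {} (a_init A) (alice m x))" for x
    define st where "st x = (case AS x of None \<Rightarrow> None | Some \<sigma> \<Rightarrow> if length \<sigma> \<le> s then Some \<sigma> else None)" for x
    define Sset where "Sset = insert None (Some ` {\<sigma>::bool list. set \<sigma> \<subseteq> UNIV \<and> length \<sigma> \<le> s})"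
    define G where "G \<sigma> ys = (case snd (trace d A UNIV \<sigma> ys) of None \<Rightarrow> None | Some \<sigma>f \<Rightarrow> run_q d UNIV (a_out A \<sigma>f))" for \<sigma> ys
    define dec where "dec i E = (SOME v. v < 16 \<and> Bn n k ^ cid i v / \<alpha> \<le> E \<and> E \<le> real n ^ 2 * Bn n k ^ cid i v)" for i E
    define g where "g so i y = (case so of None \<Rightarrow> 0 | Some \<sigma> \<Rightarrow> (case G \<sigma> (bob m y i) of None \<Rightarrow> 0 | Some E \<Rightarrow> dec i E))" for so i y
    define Succ where "Succ x i = approx_success \<alpha> A (inst (x,i))" for x i
    have key: "\<forall>x\<in>X. \<forall>i<m. Succ x i \<longrightarrow> x i = g (st x) i (\<lambda>j. if i < j then x j else 0)"
    proof (intro ballI allI impI)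
      fix x i assume xX: "x \<in> X" and im: "i < m" and sc: "Succ x i"
      let ?str = "alice m x @ bob m x i"
      have instxi: "inst (x,i) = (d, ?str)" unfolding inst_def d_def by simp
      from sc obtain E where out: "alg_output A (d, ?str) = Some E"
        and e1: "MaxCut d (final_set {} ?str) / \<alpha> \<le> E" and e2: "E \<le> MaxCut d (final_set {} ?str)"
        unfolding Succ_def approx_success_def instxi by auto
      from out obtain \<sigma>f where tr: "snd (trace d A {} (a_init A) ?str) = Some \<sigma>f"
        and ro: "run_q d (stream_ids ?str) (a_out A \<sigma>f) = Some E"
        unfolding alg_output_def by (auto split: option.splits)
      from trace_append[OF tr] obtain \<sigma>' where a1: "AS x = Some \<sigma>'"
        and a2: "\<sigma>' \<in> set (fst (trace d A {} (a_init A) ?str))"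
        and a3: "snd (trace d A ({} \<union> op_id ` set (alice m x)) \<sigma>' (bob m x i)) = Some \<sigma>f"
        unfolding AS_def by blast
      have "length \<sigma>' \<le> space_used A (d, ?str)" unfolding space_used_def using a2 by (simp add: Max_ge)
      also have "\<dots> \<le> s" using sp instxi setD xX im unfolding U_def by (metis SigmaI atLeastLessThan_iff image_eqI zero_le)
      finally have stx: "st x = Some \<sigma>'" unfolding st_def using a1 by simp
      have "G \<sigma>' (bob m x i) = Some E" unfolding G_def
        using trace_mono[OF a3, of UNIV] run_q_mono[OF ro, of UNIV] by simp
      moreover have "bob m (\<lambda>j. if i < j then x j else 0) i = bob m x i"
        unfolding bob_def by (intro arg_cong[where f="map Del"] map_cong) auto
      ultimately have gx: "g (st x) i (\<lambda>j. if i < j then x j else 0) = dec i E"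
        unfolding g_def stx by simp
      define F where "F = insert 0 ((\<lambda>j. cid j (x j)) ` {0..i})"
      have Feq: "final_set {} ?str = F" unfolding F_def using stream_props[OF xX[unfolded X_def] im mn] by simp
      have xl: "j < m \<Longrightarrow> x j < 16" for j using xX unfolding X_def by (auto simp: PiE_iff)
      have Fle: "y \<le> cid i (x i)" if "y \<in> F" for y
      proof -
        from that consider "y = 0" | j where "j \<le> i" "y = cid j (x j)" unfolding F_def by auto
        then show ?thesis
        proof cases
          case 1 then show ?thesis by simp
        next
          case 2
          then show ?thesis
          proof (cases "j = i")
            case False
            with 2 have "j < i" by simp
            then have "16 * j + 16 \<le> 16 * i" by simp
            then show ?thesis using 2 xl[of j] im unfolding cid_def by linarith
          qed simp
        qed
      qed
      have Fn: "F \<subseteq> {0..<n}"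
      proof
        fix y assume "y \<in> F"
        then have "y \<le> cid i (x i)" by (rule Fle)
        moreover have "16 * i + 16 \<le> 16 * m" using im by simp
        ultimately show "y \<in> {0..<n}" using xl[OF im] mn unfolding cid_def by auto
      qed
      have cF: "card F \<le> n" using card_mono[OF _ Fn] by simp
      have finF: "finite F" unfolding F_def by simp
      have muF: "cid i (x i) \<in> F" unfolding F_def by auto
      have mu0: "cid i (x i) > 0" unfolding cid_def by simp
      note mb = maxcut_bounds[OF finF _ muF mu0 _ cF, of k]
      have lo: "Bn n k ^ cid i (x i) \<le> MaxCut d F" using mb(1) Fle unfolding d_def F_def by auto
      have hi: "MaxCut d F \<le> real n ^ 2 * Bn n k ^ cid i (x i)" using mb(2) Fle unfolding d_def F_def by auto
      have E1: "Bn n k ^ cid i (x i) / \<alpha> \<le> E"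
        using e1 lo \<alpha>0 unfolding Feq by (meson divide_right_mono less_imp_le order_trans)
      have E2: "E \<le> real n ^ 2 * Bn n k ^ cid i (x i)" using e2 hi unfolding Feq by linarith
      have ex: "\<exists>v. v < 16 \<and> Bn n k ^ cid i v / \<alpha> \<le> E \<and> E \<le> real n ^ 2 * Bn n k ^ cid i v"
        using E1 E2 xl[OF im] by blast
      have dv: "dec i E < 16 \<and> Bn n k ^ cid i (dec i E) / \<alpha> \<le> E \<and> E \<le> real n ^ 2 * Bn n k ^ cid i (dec i E)"
        unfolding dec_def by (rule someI_ex[OF ex])
      have "cid i (dec i E) = cid i (x i)"
        using decode_unique[of n k "cid i (dec i E)" E "cid i (x i)"] dv E1 E2 n unfolding \<alpha>_def by simp
      then have "dec i E = x i" unfolding cid_def by simp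
      then show "x i = g (st x) i (\<lambda>j. if i < j then x j else 0)" using gx by simp
    qed
    have finS: "finite Sset" unfolding Sset_def
      by (intro finite_insert[THEN iffD2] finite_imageI finite_lists_length_le) simp
    have stS: "\<forall>x\<in>X. st x \<in> Sset" unfolding st_def Sset_def by (auto split: option.splits)
    have cardS: "card Sset \<le> 2^Suc s"
    proof -
      have "card Sset \<le> Suc (card (Some ` {\<sigma>::bool list. set \<sigma> \<subseteq> UNIV \<and> length \<sigma> \<le> s}))"
        unfolding Sset_def by (rule card_insert_le_m1) simp_all
      also have "\<dots> = Suc (\<Sum>i\<le>s. 2^i)"
        using card_lists_length_le[of "UNIV::bool set" s] by (subst card_image) simp_all
      also have "\<dots> = 2^Suc s" using sum_pow2[of s] by simp
      finally show ?thesis .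
    qed
    have bound: "(\<Sum>x\<in>X. card {i. i<m \<and> Succ x i}) \<le> m * (card Sset * 2^m * 16^r) + 16^m * (m - r)"
      using core[where q=16 and S=Sset and m=m and st=st and g=g and Succ=Succ and r=r] finS stS key unfolding X_def by simp
    have probeq: "measure_pmf.prob D {I. approx_success \<alpha> A I} = real (\<Sum>x\<in>X. card {i. i<m \<and> Succ x i}) / real (16^m * m)"
    proof -
      have "measure_pmf.prob D {I. approx_success \<alpha> A I} = real (card (U \<inter> inst -` {I. approx_success \<alpha> A I})) / real (card U)"
        unfolding D_def by (simp add: measure_pmf_of_set[OF Une finU])
      moreover have "U \<inter> inst -` {I. approx_success \<alpha> A I} = Sigma X (\<lambda>x. {i. i<m \<and> Succ x i})"
        unfolding U_def Succ_def by auto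
      moreover have "card (Sigma X (\<lambda>x. {i. i<m \<and> Succ x i})) = (\<Sum>x\<in>X. card {i. i<m \<and> Succ x i})"
        using finX by (intro card_SigmaI) auto
      moreover have "card U = 16^m * m" unfolding U_def X_def by (simp add: card_cartesian_product card_PiE)
      ultimately show ?thesis by simp
    qed
    define K where "K = real (card Sset)"
    define Q :: real where "Q = 4^r"
    define P :: real where "P = 64^r"
    have Q16: "real (16^m) = Q * P" unfolding Q_def P_def m_def by (simp add: power_mult power_mult_distrib[symmetric])
    have P2: "real (2^m * 16^r) = P" unfolding P_def m_def by (simp add: power_mult power_mult_distrib[symmetric])
    have Ppos: "P > 0" unfolding P_def by simp
    have "0.55 * real (16^m * m) \<le> real (\<Sum>x\<in>X. card {i. i<m \<and> Succ x i})"
      using pr probeq m0 unfolding \<alpha>_def by (simp add: field_simps)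
    also have "\<dots> \<le> real (m * (card Sset * 2^m * 16^r) + 16^m * (m - r))" using bound by linarith
    also have "\<dots> = real m * K * real (2^m * 16^r) + real (16^m) * real r"
      unfolding K_def m_def by (simp add: algebra_simps)
    finally have ineq0: "0.55 * (real (16^m) * real m) \<le> real m * K * real (2^m * 16^r) + real (16^m) * real r"
      by (simp only: of_nat_mult)
    have mr: "real m = 2 * real r" unfolding m_def by simp
    have ineq: "0.55 * (Q * P) * (2 * real r) \<le> 2 * real r * K * P + Q * P * real r"
      using ineq0 unfolding Q16 P2 mr by (simp add: algebra_simps)
    have "(0.1 * Q - 2 * K) * (P * real r) \<le> 0" using ineq by (simp add: algebra_simps)
    moreover have "P * real r > 0" using Ppos r1 by simp
    ultimately have "0.1 * Q - 2 * K \<le> 0" by (meson mult_pos_pos not_le)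
    moreover have "K \<le> 2 * 2^s" unfolding K_def using cardS
      by (metis of_nat_le_iff of_nat_numeral of_nat_mult of_nat_power power_Suc)
    moreover have "(2::real)^(s+6) = 64 * 2^s" by (simp add: power_add)
    moreover have "(0::real) < 2^s" by simp
    ultimately have "Q < 2^(s+6)" by linarith
    then have "(2::real)^(2*r) < 2^(s+6)" unfolding Q_def by (simp add: power_mult)
    then have "2*r < s+6" by (simp add: power_strict_increasing_iff)
    then have sge: "real s \<ge> 2 * real r - 5" by linarith
    have "real n powr (1/3) \<le> real n powr 1" using n by (intro powr_mono) auto
    then have "1/100 * real n powr (1/3) \<le> real n / 100" using n by simp
    also have "\<dots> \<le> 2 * real r - 5" using 33 n by linarith
    finally show "1/100 * real n powr (1/3) \<le> real s" using sge by linarith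
  qed
qed

theorem lemma5p2:
  shows "\<forall>k::nat. \<exists>c>0. \<exists>n0::nat. \<forall>n\<ge>n0. \<exists>D :: stream_instance pmf.
     (\<forall>I\<in>set_pmf D. valid_instance n I) \<and>
     (\<forall>(A::alg) (s::nat).
        (\<forall>I\<in>set_pmf D. space_used A I \<le> s) \<longrightarrow>
        measure_pmf.prob D {I. approx_success (real n ^ k) A I} \<ge> 0.55 \<longrightarrow>
        c * real n powr (1/3) \<le> real s)"
proof (intro allI)
  fix k :: nat
  show "\<exists>c>0. \<exists>n0::nat. \<forall>n\<ge>n0. \<exists>D :: stream_instance pmf.
     (\<forall>I\<in>set_pmf D. valid_instance n I) \<and>
     (\<forall>(A::alg) (s::nat).
        (\<forall>I\<in>set_pmf D. space_used A I \<le> s) \<longrightarrow>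
        measure_pmf.prob D {I. approx_success (real n ^ k) A I} \<ge> 0.55 \<longrightarrow>
        c * real n powr (1/3) \<le> real s)"
    by (rule exI[of _ "1/100"], simp only: conj_commute[of "_ > 0"], rule conjI[rotated], simp,
        rule exI[of _ 2000], intro allI impI, rule main_n[of _ k], assumption)
qed


end
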